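(* For integers $b\ge a\ge 0$, $$\sum_{\substack{\pi\in\mathcal I_{a+b}(321)\\ \mathrm{fp}(\pi)\ge b-a}} q^{\mathrm{maj}(\pi)}=\binom{a+b}{a}_q.$$ Consequently, for integers $0\le \ell\le n$ with $\ell\equiv n\pmod 2$, $$\sum_{\substack{\pi\in\mathcal I_{n}(321)\\ \mathrm{fp}(\pi)=\ell}} q^{\mathrm{maj}(\pi)}=\binom{n}{\frac{n-\ell}{2}}_q-\binom{n}{\frac{n-\ell}{2}-1}_q,$$ with the convention that $\binom{n}{-1}_q=0$.
   Context: $\mathcal I_m(321)$ is the set of involutions in $\mathcal S_m$ avoiding $321$; $\mathrm{fp}(\pi)$ is its number of fixed points; $\mathrm{maj}(\pi)=\sum_{i:\pi(i)>\pi(i+1)} i$ is the major index. $\binom{n}{k}_q$ is the Gaussian binomial coefficient. *)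

theory Defs
  imports "HOL-Combinatorics.Permutations"
begin

fun qbinom :: "'a::comm_semiring_1 \<Rightarrow> nat \<Rightarrow> nat \<Rightarrow> 'a" where
  "qbinom q n 0 = 1"
| "qbinom q 0 (Suc k) = 0"
| "qbinom q (Suc n) (Suc k) = qbinom q n k + q ^ Suc k * qbinom q n (Suc k)"

definition involution :: "(nat \<Rightarrow> nat) \<Rightarrow> bool" where
  "involution \<pi> \<longleftrightarrow> \<pi> \<circ> \<pi> = id"

definition avoids321 :: "nat \<Rightarrow> (nat \<Rightarrow> nat) \<Rightarrow> bool" where
  "avoids321 m \<pi> \<longleftrightarrow>
     \<not> (\<exists>i j k. 1 \<le> i \<and> i < j \<and> j < k \<and> k \<le> m \<and> \<pi> i > \<pi> j \<and> \<pi> j > \<pi> k)"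

definition inv321 :: "nat \<Rightarrow> (nat \<Rightarrow> nat) set" where
  "inv321 m = {\<pi>. \<pi> permutes {1..m} \<and> involution \<pi> \<and> avoids321 m \<pi>}"

definition fp :: "nat \<Rightarrow> (nat \<Rightarrow> nat) \<Rightarrow> nat" where
  "fp m \<pi> = card {i \<in> {1..m}. \<pi> i = i}"

definition maj :: "nat \<Rightarrow> (nat \<Rightarrow> nat) \<Rightarrow> nat" where
  "maj m \<pi> = (\<Sum>i \<in> {i. 1 \<le> i \<and> i < m \<and> \<pi> i > \<pi> (Suc i)}. i)"

end

theory Submission
  imports Defs
begin


lemma qbinom_zero: "n < k \<Longrightarrow> qbinom q n k = 0"
proof (induction n arbitrary: k)
  case 0 then show ?case by (cases k) auto
next
  case (Suc n) then show ?case by (cases k) auto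
qed

lemma qbinom_diag: "qbinom q n n = 1"
  by (induction n) (auto simp: qbinom_zero)

lemma alg2:
  fixes x y a b c Pj Pk q :: "'a::comm_ring_1"
  assumes "x = Pj*q*a + b" "x = a + Pk*q*b" "y = Pj*b + c" "y = b + Pk*q*q*c"
  shows "x + Pk*q*q*y = Pj*q*x + y"
proof -
  have "x + Pk*q*q*y = (Pj*q*a + b) + Pk*q*q*(Pj*b + c)" using assms(1,3) by simp
  also have "\<dots> = Pj*q*(a + Pk*q*b) + (b + Pk*q*q*c)" by (simp add: algebra_simps)
  also have "\<dots> = Pj*q*x + y" using assms(2,4) by simp
  finally show ?thesis .
qed

lemma qbinom_R2: "qbinom (q::'a::comm_ring_1) (Suc n) (Suc k) = q ^ (n - k) * qbinom q n k + qbinom q n (Suc k)"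
proof (induction n arbitrary: k)
  case 0 then show ?case by (cases k) auto
next
  case (Suc n)
  show ?case
  proof (cases k)
    case 0
    have "qbinom q (Suc (Suc n)) (Suc 0) = 1 + q * qbinom q (Suc n) (Suc 0)" by simp
    also have "qbinom q (Suc n) (Suc 0) = q ^ n + qbinom q n (Suc 0)" using Suc.IH[of 0] by simp
    finally show ?thesis using 0 by (simp add: algebra_simps)
  next
    case (Suc k')
    show ?thesis
    proof (cases "k' < n")
      case True
      define j where "j = n - Suc k'"
      have n: "n = Suc k' + j" using True by (simp add: j_def)
      have e1: "qbinom q (Suc n) (Suc k') = q ^ (n - k') * qbinom q n k' + qbinom q n (Suc k')" by (rule Suc.IH)
      have e2: "qbinom q (Suc n) (Suc (Suc k')) = q ^ (n - Suc k') * qbinom q n (Suc k') + qbinom q n (Suc (Suc k'))" by (rule Suc.IH)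
      have nk: "n - k' = Suc j" "n - Suc k' = j" "Suc n - Suc k' = Suc j" using n by auto
      have e1': "qbinom q (Suc n) (Suc k') = q ^ j * q * qbinom q n k' + qbinom q n (Suc k')"
        using e1 unfolding nk by (simp add: mult.commute)
      have e2': "qbinom q (Suc n) (Suc (Suc k')) = q ^ j * qbinom q n (Suc k') + qbinom q n (Suc (Suc k'))"
        using e2 unfolding nk .
      have r1: "qbinom q (Suc n) (Suc k') = qbinom q n k' + q ^ k' * q * qbinom q n (Suc k')"
        by (simp add: mult.commute)
      have r2: "qbinom q (Suc n) (Suc (Suc k')) = qbinom q n (Suc k') + q ^ k' * q * q * qbinom q n (Suc (Suc k'))"
        by (simp add: mult.commute)
      have "qbinom q (Suc n) (Suc k') + q ^ k' * q * q * qbinom q (Suc n) (Suc (Suc k'))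
          = q ^ j * q * qbinom q (Suc n) (Suc k') + qbinom q (Suc n) (Suc (Suc k'))"
        by (rule alg2[OF e1' r1 e2' r2])
      then show ?thesis unfolding \<open>k = Suc k'\<close> nk by (simp add: mult.commute mult.left_commute)
    next
      case False
      then show ?thesis using Suc by (cases "k' = n") (auto simp: qbinom_zero qbinom_diag)
    qed
  qed
qed

lemma qbinom_sym: "k \<le> n \<Longrightarrow> qbinom (q::'a::comm_ring_1) n k = qbinom q n (n - k)"
proof (induction n arbitrary: k)
  case 0 then show ?case by simp
next
  case (Suc n)
  show ?case
  proof (cases k)
    case 0 then show ?thesis by (simp add: qbinom_diag)
  next
    case (Suc k')
    show ?thesis
    proof (cases "k' = n")
      case True then show ?thesis using Suc by (simp add: qbinom_diag)
    next
      case False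
      then have kn: "k' < n" using Suc \<open>k \<le> Suc n\<close> by auto
      define j where "j = n - Suc k'"
      have j: "n - k' = Suc j" using kn by (simp add: j_def)
      have "qbinom q (Suc n) (Suc n - k) = qbinom q (Suc n) (Suc j)" using Suc j by simp
      also have "\<dots> = q ^ (n - j) * qbinom q n j + qbinom q n (Suc j)" by (rule qbinom_R2)
      also have "n - j = Suc k'" using j kn by auto
      also have "qbinom q n j = qbinom q n (Suc k')"
      proof -
        have "n - Suc k' = j" using j by arith
        then show ?thesis using Suc.IH[of "Suc k'"] kn by simp
      qed
      also have "qbinom q n (Suc j) = qbinom q n k'" using Suc.IH[of k'] kn j by simp
      finally have R: "qbinom q (Suc n) (Suc n - k) = q ^ Suc k' * qbinom q n (Suc k') + qbinom q n k'" .
      have L: "qbinom q (Suc n) k = qbinom q n k' + q ^ Suc k' * qbinom q n (Suc k')" using Suc by simp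
      show ?thesis unfolding L R by (rule add.commute)
    qed
  qed
qed

definition X :: "'a::comm_ring_1 \<Rightarrow> nat \<Rightarrow> nat \<Rightarrow> 'a" where
  "X q n d = qbinom q n d - (if d = 0 then 0 else qbinom q n (d - 1))"

lemma X_tele: "(\<Sum>d\<le>a. X q n d) = qbinom q n a"
  by (induction a) (auto simp: X_def)

lemma X_odd_zero: assumes "d \<ge> 1" shows "X (q::'a::comm_ring_1) (2 * d - 1) d = 0"
proof (cases d)
  case 0 then show ?thesis using assms by simp
next
  case (Suc e)
  then have "qbinom q (2*d-1) d = qbinom q (2*d-1) (d-1)" using qbinom_sym[of d "2*d-1" q] by simp
  then show ?thesis using Suc by (simp add: X_def)
qed

lemma alg1:
  fixes Q t q A1 A2 B1 B2 B3 C1 C2 C3 P :: "'a::comm_ring_1"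
  assumes "A1 = Q * B2 + B1" "A2 = Q * q * B3 + B2" "B2 = C2 + t * q * C1" "B2 = Q * C2 + C1"
    "B3 = C3 + t * C2" "B3 = Q * q * C3 + C2" "P = Q * t * q"
  shows "(A1 - A2) - (B1 - B2) = P * (C1 - C2) + (B2 - B3) - (C1 - C2)"
proof -
  have "((A1 - A2) - (B1 - B2)) - (P * (C1 - C2) + (B2 - B3) - (C1 - C2)) =
     Q*(B2 - C2 - t*q*C1) - Q*q*(B3 - C3 - t*C2) - (B2 - Q*C2 - C1) + (B3 - Q*q*C3 - C2)"
    unfolding assms(1,2,7) by (simp add: algebra_simps)
  also have "\<dots> = 0"
  proof -
    have "B2 - C2 - t*q*C1 = 0" using assms(3) by simp
    moreover have "B3 - C3 - t*C2 = 0" using assms(5) by simp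
    moreover have "B2 - Q*C2 - C1 = 0" using assms(4) by simp
    moreover have "B3 - Q*q*C3 - C2 = 0" using assms(6) by simp
    ultimately
    show ?thesis by simp
  qed
  finally show ?thesis by (simp only: right_minus_eq)
qed
lemma alg0:
  fixes Q q A1 A2 B1 B2 C1 P :: "'a::comm_ring_1"
  assumes "A1 = Q * B2 + B1" "A2 = Q * q + B2" "B2 = 1 + q * C1" "B2 = Q + C1"
     "P = Q * q"
  shows "(A1 - A2) - (B1 - B2) = P * (C1 - 1) + (B2 - 1) - (C1 - 1)"
proof -
  have "((A1 - A2) - (B1 - B2)) - (P * (C1 - 1) + (B2 - 1) - (C1 - 1)) =
     Q*(B2 - 1 - q*C1) - (B2 - Q - C1)"
    unfolding assms(1,2,5) by (simp add: algebra_simps)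
  also have "\<dots> = 0"
  proof -
    have "B2 - 1 - q*C1 = 0" using assms(3) by simp
    moreover have "B2 - Q - C1 = 0" using assms(4) by simp
    ultimately
    show ?thesis by simp
  qed
  finally show ?thesis by (simp only: right_minus_eq)
qed

lemma X_ident: "2 * d \<le> p \<Longrightarrow>
  X (q::'a::comm_ring_1) (Suc (Suc p)) (Suc d) - X q (Suc p) (Suc d) = q ^ Suc p * X q p d + X q (Suc p) d - X q p d"
proof (cases d)
  case 0
  then show ?thesis using qbinom_R2[of q "Suc p" 0] by (simp add: X_def del: qbinom.simps(3))
next
  case (Suc e)
  assume "2 * d \<le> p"
  then have ep: "e < p" using Suc by auto
  define Q where "Q = q ^ (p - e)"
  define t where "t = q ^ e"
  have a1: "qbinom q (Suc (Suc p)) (Suc (Suc e)) = Q * qbinom q (Suc p) (Suc e) + qbinom q (Suc p) (Suc (Suc e))"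
    using qbinom_R2[of q "Suc p" "Suc e"] by (simp add: Q_def del: qbinom.simps(3))
  have a2: "qbinom q (Suc (Suc p)) (Suc e) = Q * q * qbinom q (Suc p) e + qbinom q (Suc p) (Suc e)"
    using qbinom_R2[of q "Suc p" "e"] ep by (simp add: Q_def Suc_diff_le mult.commute del: qbinom.simps(3))
  have b1: "qbinom q (Suc p) (Suc e) = qbinom q p e + t * q * qbinom q p (Suc e)"
    by (simp add: t_def mult.commute)
  have b2: "qbinom q (Suc p) (Suc e) = Q * qbinom q p e + qbinom q p (Suc e)"
    using qbinom_R2[of q p e] by (simp add: Q_def del: qbinom.simps(3))
  have pw: "q ^ Suc p = Q * t * q"
  proof -
    have "Suc p = (p - e) + e + 1" using ep by simp
    then have "q ^ Suc p = q ^ (p - e) * q ^ e * q ^ 1" by (metis power_add)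
    then show ?thesis unfolding Q_def t_def by simp
  qed
  show ?thesis
  proof (cases e)
    case 0
    have Q0: "Q = q ^ p" using 0 by (simp add: Q_def)
    have "(qbinom q (Suc (Suc p)) (Suc (Suc e)) - qbinom q (Suc (Suc p)) (Suc e))
       - (qbinom q (Suc p) (Suc (Suc e)) - qbinom q (Suc p) (Suc e))
       = q ^ Suc p * (qbinom q p (Suc e) - 1) + (qbinom q (Suc p) (Suc e) - 1) - (qbinom q p (Suc e) - 1)"
    proof -
      note D = qbinom.simps(3)
      have a1': "qbinom q (Suc (Suc p)) (Suc (Suc 0)) = Q * qbinom q (Suc p) (Suc 0) + qbinom q (Suc p) (Suc (Suc 0))"
        using a1 unfolding 0 .
      have a2': "qbinom q (Suc (Suc p)) (Suc 0) = Q * q + qbinom q (Suc p) (Suc 0)" using a2 0 by (simp del: D)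
      have b1': "qbinom q (Suc p) (Suc 0) = 1 + q * qbinom q p (Suc 0)" using b1 0 t_def by (simp del: D)
      have b2': "qbinom q (Suc p) (Suc 0) = Q + qbinom q p (Suc 0)" using b2 0 by (simp del: D)
      have pw': "q ^ Suc p = Q * q" using pw 0 t_def by (simp del: D)
      show ?thesis unfolding 0 by (rule alg0[OF a1' a2' b1' b2' pw'])
    qed
    then show ?thesis unfolding X_def \<open>d = Suc e\<close> 0 by (simp del: qbinom.simps(3))
  next
    case (Suc e')
    have c1: "qbinom q (Suc p) e = qbinom q p e' + t * qbinom q p e"
      using Suc by (simp add: t_def)
    have pe: "p - e' = Suc (p - e)" using Suc ep by simp
    have c2: "qbinom q (Suc p) e = Q * q * qbinom q p e' + qbinom q p e"
      using qbinom_R2[of q p e'] Suc ep unfolding pe by (simp add: Q_def Suc_diff_le mult.commute del: qbinom.simps(3))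
    have "(qbinom q (Suc (Suc p)) (Suc (Suc e)) - qbinom q (Suc (Suc p)) (Suc e))
       - (qbinom q (Suc p) (Suc (Suc e)) - qbinom q (Suc p) (Suc e))
       = q ^ Suc p * (qbinom q p (Suc e) - qbinom q p e) + (qbinom q (Suc p) (Suc e) - qbinom q (Suc p) e)
         - (qbinom q p (Suc e) - qbinom q p e)"
      by (rule alg1[OF a1 a2 b1 b2 c1 c2 pw])
    then show ?thesis unfolding X_def \<open>d = Suc e\<close> using Suc by (simp del: qbinom.simps(3))
  qed
qed



datatype ltr = LU | LD | LF

definition cnt :: "ltr \<Rightarrow> ltr list \<Rightarrow> nat" where
  "cnt x xs = length (filter (\<lambda>y. y = x) xs)"

definition valid :: "ltr list \<Rightarrow> bool" where
  "valid xs \<longleftrightarrow> (\<forall>t \<le> length xs. cnt LD (take t xs) \<le> cnt LU (take t xs)) \<and>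
     (\<forall>i < length xs. xs ! i = LF \<longrightarrow> cnt LU (take i xs) = cnt LD (take i xs))"

definition majw :: "ltr list \<Rightarrow> nat" where
  "majw xs = \<Sum> {i. 1 \<le> i \<and> i < length xs \<and> xs ! (i - 1) = LU \<and> xs ! i = LD}"

definition Wd :: "nat \<Rightarrow> nat \<Rightarrow> nat \<Rightarrow> ltr list set" where
  "Wd n d h = {xs. length xs = n \<and> valid xs \<and> cnt LD xs = d \<and> cnt LU xs = d + h}"

definition SA :: "'a::comm_ring_1 \<Rightarrow> nat \<Rightarrow> nat \<Rightarrow> nat \<Rightarrow> 'a" where
  "SA q n d h = (\<Sum>xs \<in> {xs \<in> Wd n d h. xs = [] \<or> last xs \<noteq> LD}. q ^ majw xs)"

definition SB :: "'a::comm_ring_1 \<Rightarrow> nat \<Rightarrow> nat \<Rightarrow> nat \<Rightarrow> 'a" where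
  "SB q n d h = (\<Sum>xs \<in> {xs \<in> Wd n d h. xs \<noteq> [] \<and> last xs = LD}. q ^ majw xs)"

lemma cnt_snoc: "cnt x (ys @ [y]) = cnt x ys + (if y = x then 1 else 0)"
  by (simp add: cnt_def)

lemma cnt_Nil[simp]: "cnt x [] = 0" by (simp add: cnt_def)

lemma set_ltr: "set xs \<subseteq> {LU, LD, LF}"
  using ltr.exhaust by auto

lemma finite_Wd: "finite (Wd n d h)"
proof (rule finite_subset)
  show "Wd n d h \<subseteq> {xs. set xs \<subseteq> {LU, LD, LF} \<and> length xs = n}" using set_ltr by (auto simp: Wd_def)
  show "finite {xs. set xs \<subseteq> {LU, LD, LF} \<and> length xs = n}" by (rule finite_lists_length_eq) simp
qed

lemma valid_le: "valid ys \<Longrightarrow> cnt LD ys \<le> cnt LU ys"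
  unfolding valid_def by (metis order_refl take_all)

lemma valid_snoc: "valid (ys @ [x]) \<longleftrightarrow> valid ys \<and> (x = LD \<longrightarrow> cnt LD ys < cnt LU ys) \<and> (x = LF \<longrightarrow> cnt LU ys = cnt LD ys)"
proof -
  have A: "(\<forall>t \<le> length (ys @ [x]). cnt LD (take t (ys @ [x])) \<le> cnt LU (take t (ys @ [x]))) \<longleftrightarrow>
     (\<forall>t \<le> length ys. cnt LD (take t ys) \<le> cnt LU (take t ys)) \<and> cnt LD (ys @ [x]) \<le> cnt LU (ys @ [x])"
    by (auto simp: le_Suc_eq)
  have B: "(\<forall>i < length (ys @ [x]). (ys @ [x]) ! i = LF \<longrightarrow> cnt LU (take i (ys @ [x])) = cnt LD (take i (ys @ [x]))) \<longleftrightarrow>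
     (\<forall>i < length ys. ys ! i = LF \<longrightarrow> cnt LU (take i ys) = cnt LD (take i ys)) \<and> (x = LF \<longrightarrow> cnt LU ys = cnt LD ys)"
    by (auto simp: less_Suc_eq nth_append)
  have C: "valid ys \<Longrightarrow> cnt LD ys \<le> cnt LU ys"
    unfolding valid_def by (metis order_refl take_all)
  show ?thesis unfolding valid_def[of "ys @ [x]"] A B
    using C unfolding valid_def[of ys] cnt_snoc by (cases x) auto
qed

lemma majw_snoc: "majw (ys @ [x]) = majw ys + (if x = LD \<and> ys \<noteq> [] \<and> last ys = LU then length ys else 0)"
proof -
  let ?S = "\<lambda>zs. {i. 1 \<le> i \<and> i < length zs \<and> zs ! (i - 1) = LU \<and> zs ! i = LD}"
  have fin: "finite (?S ys)" by (rule finite_subset[of _ "{..<length ys}"]) auto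
  have eq: "?S (ys @ [x]) = ?S ys \<union> (if x = LD \<and> ys \<noteq> [] \<and> last ys = LU then {length ys} else {})"
  proof (cases "ys = []")
    case True then show ?thesis by auto
  next
    case False
    then have lst: "ys ! (length ys - 1) = last ys" by (simp add: last_conv_nth)
    show ?thesis
      apply (rule set_eqI)
      using lst by (auto simp: nth_append less_Suc_eq split: if_splits)
  qed
  show ?thesis unfolding majw_def eq using fin by auto
qed

lemma snoc_ex: "length xs = Suc n \<Longrightarrow> \<exists>ys x. xs = ys @ [x] \<and> length ys = n"
  by (metis append_butlast_last_id length_butlast diff_Suc_1 length_0_conv nat.distinct(1))

lemma sum_split: "finite S \<Longrightarrow> sum f S = sum f {x \<in> S. P x} + sum f {x \<in> S. \<not> P x}"
proof -
  assume "finite S"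
  have "S = {x \<in> S. P x} \<union> {x \<in> S. \<not> P x}" by auto
  then have "sum f S = sum f ({x \<in> S. P x} \<union> {x \<in> S. \<not> P x})" by simp
  also have "\<dots> = sum f {x \<in> S. P x} + sum f {x \<in> S. \<not> P x}"
    by (rule sum.union_disjoint) (use \<open>finite S\<close> in auto)
  finally show ?thesis .
qed

lemma Wd_sum: "(\<Sum>xs \<in> Wd n d h. q ^ majw xs) = SA q n d h + SB q n d h"
proof -
  have "(\<Sum>xs \<in> Wd n d h. q ^ majw xs) = (\<Sum>xs \<in> {xs \<in> Wd n d h. xs = [] \<or> last xs \<noteq> LD}. q ^ majw xs)
     + (\<Sum>xs \<in> {xs \<in> Wd n d h. \<not> (xs = [] \<or> last xs \<noteq> LD)}. q ^ majw xs)"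
    by (rule sum_split[OF finite_Wd])
  then show ?thesis unfolding SA_def SB_def by simp
qed

lemma WdA_Suc: "{xs \<in> Wd (Suc n) d h. xs = [] \<or> last xs \<noteq> LD} =
   (if h = 0 then (\<lambda>ys. ys @ [LF]) ` Wd n d 0 else (\<lambda>ys. ys @ [LU]) ` Wd n d (h - 1))"
proof (rule set_eqI)
  fix xs
  show "xs \<in> {xs \<in> Wd (Suc n) d h. xs = [] \<or> last xs \<noteq> LD} \<longleftrightarrow>
     xs \<in> (if h = 0 then (\<lambda>ys. ys @ [LF]) ` Wd n d 0 else (\<lambda>ys. ys @ [LU]) ` Wd n d (h - 1))"
  proof
    assume xs: "xs \<in> {xs \<in> Wd (Suc n) d h. xs = [] \<or> last xs \<noteq> LD}"
    then obtain ys x where yx: "xs = ys @ [x]" "length ys = n" using snoc_ex unfolding Wd_def by blast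
    have v: "valid (ys @ [x])" "cnt LD (ys @ [x]) = d" "cnt LU (ys @ [x]) = d + h" "x \<noteq> LD"
      using xs yx unfolding Wd_def by auto
    then have vy: "valid ys" using valid_snoc by blast
    show "xs \<in> (if h = 0 then (\<lambda>ys. ys @ [LF]) ` Wd n d 0 else (\<lambda>ys. ys @ [LU]) ` Wd n d (h - 1))"
    proof (cases x)
      case LU
      then have "h \<noteq> 0" "ys \<in> Wd n d (h - 1)" using v vy yx valid_le[OF vy] unfolding Wd_def cnt_snoc by auto
      then show ?thesis using yx LU by auto
    next
      case LF
      then have "h = 0" "ys \<in> Wd n d 0" using v vy yx valid_snoc[of ys LF] unfolding Wd_def cnt_snoc by auto
      then show ?thesis using yx LF by auto
    next
      case LD then show ?thesis using v by simp
    qed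
  next
    assume "xs \<in> (if h = 0 then (\<lambda>ys. ys @ [LF]) ` Wd n d 0 else (\<lambda>ys. ys @ [LU]) ` Wd n d (h - 1))"
    then show "xs \<in> {xs \<in> Wd (Suc n) d h. xs = [] \<or> last xs \<noteq> LD}"
      by (cases "h = 0") (auto simp: Wd_def valid_snoc cnt_snoc)
  qed
qed

lemma WdB_Suc: "{xs \<in> Wd (Suc n) (Suc d) h. xs \<noteq> [] \<and> last xs = LD} = (\<lambda>ys. ys @ [LD]) ` Wd n d (Suc h)"
proof (rule set_eqI)
  fix xs
  show "xs \<in> {xs \<in> Wd (Suc n) (Suc d) h. xs \<noteq> [] \<and> last xs = LD} \<longleftrightarrow> xs \<in> (\<lambda>ys. ys @ [LD]) ` Wd n d (Suc h)"
  proof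
    assume xs: "xs \<in> {xs \<in> Wd (Suc n) (Suc d) h. xs \<noteq> [] \<and> last xs = LD}"
    then obtain ys x where yx: "xs = ys @ [x]" "length ys = n" using snoc_ex unfolding Wd_def by blast
    have v: "valid (ys @ [x])" "cnt LD (ys @ [x]) = Suc d" "cnt LU (ys @ [x]) = Suc d + h" "x = LD"
      using xs yx unfolding Wd_def by auto
    then have "ys \<in> Wd n d (Suc h)" using yx valid_snoc[of ys LD] unfolding Wd_def cnt_snoc by auto
    then show "xs \<in> (\<lambda>ys. ys @ [LD]) ` Wd n d (Suc h)" using yx v by auto
  next
    assume "xs \<in> (\<lambda>ys. ys @ [LD]) ` Wd n d (Suc h)"
    then show "xs \<in> {xs \<in> Wd (Suc n) (Suc d) h. xs \<noteq> [] \<and> last xs = LD}"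
      by (auto simp: Wd_def valid_snoc cnt_snoc)
  qed
qed

lemma cnt_pos_lastD: "xs \<noteq> [] \<Longrightarrow> last xs = LD \<Longrightarrow> cnt LD xs > 0"
proof -
  assume "xs \<noteq> []" "last xs = LD"
  then have "xs = butlast xs @ [LD]" by (metis append_butlast_last_id)
  then have "cnt LD xs = cnt LD (butlast xs) + 1" by (metis cnt_snoc)
  then show ?thesis by simp
qed

lemma WdB_0: "{xs \<in> Wd n 0 h. xs \<noteq> [] \<and> last xs = LD} = {}"
  using cnt_pos_lastD unfolding Wd_def by fastforce

lemma Wd_lastU: "ys \<in> Wd n d (Suc h) \<Longrightarrow> ys = [] \<or> last ys \<noteq> LD \<Longrightarrow> ys \<noteq> [] \<and> last ys = LU"
proof -
  assume ys: "ys \<in> Wd n d (Suc h)" and l: "ys = [] \<or> last ys \<noteq> LD"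
  have ne: "ys \<noteq> []" using ys unfolding Wd_def by auto
  then have yy: "ys = butlast ys @ [last ys]" by simp
  have "last ys \<noteq> LF"
  proof
    assume "last ys = LF"
    then have "valid (butlast ys @ [LF])" using ys yy unfolding Wd_def by (metis (mono_tags, lifting) mem_Collect_eq)
    then have "cnt LU (butlast ys) = cnt LD (butlast ys)" using valid_snoc by blast
    moreover have "cnt LU ys = cnt LU (butlast ys)" "cnt LD ys = cnt LD (butlast ys)"
      using yy \<open>last ys = LF\<close> cnt_snoc by (metis add.right_neutral ltr.distinct)+
    ultimately show False using ys unfolding Wd_def by auto
  qed
  then show ?thesis using ne l by (cases "last ys") auto
qed

lemma sum_image_snoc: "(\<Sum>xs \<in> (\<lambda>ys. ys @ [x]) ` A. f xs) = (\<Sum>ys \<in> A. f (ys @ [x]))"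
  by (rule sum.reindex_cong[where l = "\<lambda>ys. ys @ [x]"]) (auto simp: inj_on_def)

lemma SA_Suc: "SA q (Suc n) d h = (if h = 0 then SA q n d 0 + SB q n d 0 else SA q n d (h - 1) + SB q n d (h - 1))"
proof (cases "h = 0")
  case True
  have "SA q (Suc n) d h = (\<Sum>ys \<in> Wd n d 0. q ^ majw (ys @ [LF]))"
    unfolding SA_def WdA_Suc using True by (simp add: sum_image_snoc)
  also have "\<dots> = (\<Sum>ys \<in> Wd n d 0. q ^ majw ys)" by (simp add: majw_snoc)
  finally show ?thesis using True Wd_sum by simp
next
  case False
  have "SA q (Suc n) d h = (\<Sum>ys \<in> Wd n d (h - 1). q ^ majw (ys @ [LU]))"
    unfolding SA_def WdA_Suc using False by (simp add: sum_image_snoc)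
  also have "\<dots> = (\<Sum>ys \<in> Wd n d (h - 1). q ^ majw ys)" by (simp add: majw_snoc)
  finally show ?thesis using False Wd_sum by simp
qed

lemma SB_0: "SB q n 0 h = 0"
  unfolding SB_def WdB_0 by simp

lemma SB_Suc: "SB q (Suc n) (Suc d) h = q ^ n * SA q n d (Suc h) + SB q n d (Suc h)"
proof -
  let ?W = "Wd n d (Suc h)"
  let ?P = "\<lambda>ys::ltr list. ys = [] \<or> last ys \<noteq> LD"
  have "SB q (Suc n) (Suc d) h = (\<Sum>ys \<in> ?W. q ^ majw (ys @ [LD]))"
    unfolding SB_def WdB_Suc by (simp add: sum_image_snoc)
  also have "\<dots> = (\<Sum>ys \<in> {ys \<in> ?W. ?P ys}. q ^ majw (ys @ [LD])) + (\<Sum>ys \<in> {ys \<in> ?W. \<not> ?P ys}. q ^ majw (ys @ [LD]))"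
    by (rule sum_split[OF finite_Wd])
  also have "(\<Sum>ys \<in> {ys \<in> ?W. ?P ys}. q ^ majw (ys @ [LD])) = (\<Sum>ys \<in> {ys \<in> ?W. ?P ys}. q ^ n * q ^ majw ys)"
  proof (rule sum.cong)
    fix ys assume "ys \<in> {ys \<in> ?W. ?P ys}"
    then have "ys \<noteq> [] \<and> last ys = LU" "length ys = n" using Wd_lastU unfolding Wd_def by auto
    then show "q ^ majw (ys @ [LD]) = q ^ n * q ^ majw ys" by (simp add: majw_snoc power_add mult.commute)
  qed simp
  also have "(\<Sum>ys \<in> {ys \<in> ?W. \<not> ?P ys}. q ^ majw (ys @ [LD])) = (\<Sum>ys \<in> {ys \<in> ?W. \<not> ?P ys}. q ^ majw ys)"
    by (rule sum.cong) (auto simp: majw_snoc)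
  finally show ?thesis unfolding SA_def SB_def by (simp add: sum_distrib_left)
qed

definition X1 :: "'a::comm_ring_1 \<Rightarrow> nat \<Rightarrow> nat \<Rightarrow> 'a" where
  "X1 q n d = (case n of 0 \<Rightarrow> (if d = 0 then 1 else 0) | Suc p \<Rightarrow> X q p d)"

definition X2 :: "'a::comm_ring_1 \<Rightarrow> nat \<Rightarrow> nat \<Rightarrow> 'a" where
  "X2 q n d = X q n d - X1 q n d"

lemma Wd_0: "Wd 0 d h = (if d = 0 \<and> h = 0 then {[]} else {})"
  by (auto simp: Wd_def valid_def)

lemma S_closed: "SA (q::'a::comm_ring_1) n d h = (if 2 * d + h \<le> n then X1 q n d else 0) \<and>
                 SB q n d h = (if 2 * d + h \<le> n then X2 q n d else 0)"
proof (induction n arbitrary: d h)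
  case 0
  have e: "\<And>P. {xs::ltr list. xs = [] \<and> P xs} = (if P [] then {[]} else {})" by auto
  have m: "majw [] = 0" by (simp add: majw_def)
  show ?case unfolding SA_def SB_def Wd_0 by (auto simp: X1_def X2_def X_def e m)
next
  case (Suc n)
  have A: "SA q (Suc n) d h = (if 2 * d + h \<le> Suc n then X1 q (Suc n) d else 0)"
  proof (cases "h = 0")
    case True
    have "SA q (Suc n) d h = (if 2 * d \<le> n then X q n d else 0)"
      using Suc.IH[of d 0] True SA_Suc[of q n d h] by (simp add: X2_def)
    also have "\<dots> = (if 2 * d + h \<le> Suc n then X1 q (Suc n) d else 0)"
    proof (cases "2 * d = Suc n")
      case True
      then have "d \<ge> 1" "n = 2 * d - 1" by auto
      then have "X q n d = 0" using X_odd_zero by blast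
      then show ?thesis using True \<open>h = 0\<close> by (simp add: X1_def)
    next
      case False then show ?thesis using \<open>h = 0\<close> by (auto simp: X1_def)
    qed
    finally show ?thesis .
  next
    case False
    have "SA q (Suc n) d h = (if 2 * d + (h - 1) \<le> n then X q n d else 0)"
      using Suc.IH[of d "h - 1"] False SA_Suc[of q n d h] by (simp add: X2_def)
    then show ?thesis using False by (auto simp: X1_def)
  qed
  have B: "SB q (Suc n) d h = (if 2 * d + h \<le> Suc n then X2 q (Suc n) d else 0)"
  proof (cases d)
    case 0
    then show ?thesis by (simp add: SB_0 X2_def X1_def X_def)
  next
    case (Suc d')
    have "SB q (Suc n) d h = (if 2 * d' + Suc h \<le> n then q ^ n * X1 q n d' + X2 q n d' else 0)"
      using Suc.IH[of d' "Suc h"] Suc SB_Suc[of q n d' h] by simp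
    also have "\<dots> = (if 2 * d + h \<le> Suc n then X2 q (Suc n) d else 0)"
    proof (cases "2 * d' + Suc h \<le> n")
      case True
      then obtain p where p: "n = Suc p" by (cases n) auto
      have "2 * d' \<le> p" using True p by simp
      from X_ident[OF this, of q] have "X2 q (Suc n) d = q ^ n * X1 q n d' + X2 q n d'"
        unfolding X2_def X1_def p Suc by simp
      then show ?thesis using True Suc by simp
    next
      case False then show ?thesis using Suc by simp
    qed
    finally show ?thesis .
  qed
  show ?case using A B by blast
qed

lemma Wd_closed: "2 * d \<le> n \<Longrightarrow> (\<Sum>xs \<in> Wd n d 0. (q::'a::comm_ring_1) ^ majw xs) = X q n d"
  using S_closed[of q n d 0] unfolding Wd_sum by (simp add: X2_def)



definition lt :: "(nat \<Rightarrow> nat) \<Rightarrow> nat \<Rightarrow> ltr" where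
  "lt p i = (if p i = i then LF else if i < p i then LU else LD)"

definition wordOf :: "nat \<Rightarrow> (nat \<Rightarrow> nat) \<Rightarrow> ltr list" where
  "wordOf m p = map (lt p) [1..<Suc m]"

definition cntf :: "(nat \<Rightarrow> ltr) \<Rightarrow> ltr \<Rightarrow> nat \<Rightarrow> nat" where
  "cntf g x t = card {i \<in> {1..t}. g i = x}"

lemma card_Suc_filter: "card {i \<in> {1..Suc t}. P i} = card {i \<in> {1..t}. P i} + (if P (Suc t) then 1 else 0)"
proof -
  have "{i \<in> {1..Suc t}. P i} = {i \<in> {1..t}. P i} \<union> (if P (Suc t) then {Suc t} else {})" by (auto simp: le_Suc_eq)
  then show ?thesis by auto
qed

lemma cntf_0[simp]: "cntf g x 0 = 0" by (simp add: cntf_def)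

lemma cntf_Suc: "cntf g x (Suc t) = cntf g x t + (if g (Suc t) = x then 1 else 0)"
  unfolding cntf_def by (rule card_Suc_filter)

lemma cntf_mono: "t \<le> t' \<Longrightarrow> cntf g x t \<le> cntf g x t'"
  unfolding cntf_def by (rule card_mono) auto

lemma cntf_strict: "t < t' \<Longrightarrow> g t' = x \<Longrightarrow> cntf g x t < cntf g x t'"
  unfolding cntf_def
proof (rule psubset_card_mono)
  assume "t < t'" "g t' = x"
  then have a: "t' \<in> {i \<in> {1..t'}. g i = x}" "t' \<notin> {i \<in> {1..t}. g i = x}" by auto
  have b: "{i \<in> {1..t}. g i = x} \<subseteq> {i \<in> {1..t'}. g i = x}" using \<open>t < t'\<close> by auto
  have c: "{i \<in> {1..t}. g i = x} \<noteq> {i \<in> {1..t'}. g i = x}" using a by metis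
  show "{i \<in> {1..t}. g i = x} \<subset> {i \<in> {1..t'}. g i = x}" using b c by (rule psubsetI)
qed simp

lemma cntf_cong: "(\<And>i. 1 \<le> i \<Longrightarrow> i \<le> t \<Longrightarrow> g i = g' i) \<Longrightarrow> cntf g x t = cntf g' x t"
  unfolding cntf_def by (rule arg_cong[where f=card]) auto

lemma cnt_take: "t \<le> length xs \<Longrightarrow> cnt x (take t xs) = cntf (\<lambda>i. xs ! (i - 1)) x t"
proof (induction t)
  case 0 then show ?case by simp
next
  case (Suc t)
  then have "take (Suc t) xs = take t xs @ [xs ! t]" by (simp add: take_Suc_conv_app_nth)
  then show ?case using Suc by (simp add: cnt_snoc cntf_Suc)
qed

lemma wordOf_nth: "1 \<le> i \<Longrightarrow> i \<le> m \<Longrightarrow> wordOf m p ! (i - 1) = lt p i"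
  unfolding wordOf_def by (simp del: upt_Suc add: nth_map)

lemma length_wordOf[simp]: "length (wordOf m p) = m" by (simp add: wordOf_def)

lemma cnt_wordOf: assumes "t \<le> m" shows "cnt x (take t (wordOf m p)) = cntf (lt p) x t"
proof -
  have "cnt x (take t (wordOf m p)) = cntf (\<lambda>i. wordOf m p ! (i - 1)) x t"
    using cnt_take[of t "wordOf m p" x] assms by simp
  also have "\<dots> = cntf (lt p) x t"
    by (rule cntf_cong) (use wordOf_nth assms in auto)
  finally show ?thesis .
qed

definition Wc :: "nat \<Rightarrow> ltr list set" where
  "Wc m = {xs. length xs = m \<and> valid xs \<and> cnt LU xs = cnt LD xs}"

context
  fixes m :: nat and p :: "nat \<Rightarrow> nat"
  assumes mem: "p \<in> inv321 m"
begin

lemma perm: "p permutes {1..m}" using mem by (simp add: inv321_def)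

lemma pp[simp]: "p (p i) = i"
proof -
  have "p \<circ> p = id" using mem by (simp add: inv321_def involution_def)
  then have "(p \<circ> p) i = id i" by simp
  then show ?thesis by simp
qed

lemma out: "i \<notin> {1..m} \<Longrightarrow> p i = i" using perm by (rule permutes_not_in)

lemma nf_in: "p i \<noteq> i \<Longrightarrow> 1 \<le> i \<and> i \<le> m \<and> 1 \<le> p i \<and> p i \<le> m"
proof -
  assume "p i \<noteq> i"
  then have "i \<in> {1..m}" using out by blast
  moreover then have "p i \<in> {1..m}" using permutes_in_image[OF perm] by blast
  ultimately show ?thesis by auto
qed

lemma no321: assumes "1 \<le> i" "i < j" "j < k" "k \<le> m" "p j < p i" "p k < p j" shows False
proof -
  have "avoids321 m p" using mem by (simp add: inv321_def)
  then show False unfolding avoids321_def using assms by blast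
qed

lemma L1: "p f = f \<Longrightarrow> a < f \<Longrightarrow> f < p a \<Longrightarrow> False"
proof -
  assume a: "p f = f" "a < f" "f < p a"
  then have "p a \<noteq> a" by auto
  then have b: "1 \<le> a" "p a \<le> m" using nf_in by blast+
  show False by (rule no321[of a f "p a"]) (use a b in simp_all)
qed

lemma FIFO: "a < a' \<Longrightarrow> a < p a \<Longrightarrow> a' < p a' \<Longrightarrow> p a < p a'"
proof (rule ccontr)
  assume a: "a < a'" "a < p a" "a' < p a'" "\<not> p a < p a'"
  have "p a' \<noteq> p a"
  proof
    assume "p a' = p a"
    then have "p (p a') = p (p a)" by simp
    then show False using a(1) by simp
  qed
  then have c: "p a' < p a" using a(4) by simp
  have b: "1 \<le> a" "p a' \<le> m" using nf_in[of a] nf_in[of a'] a by auto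
  show False by (rule no321[of a a' "p a'"]) (use a b c in simp_all)
qed

lemma descent: "1 \<le> i \<Longrightarrow> i < m \<Longrightarrow> (p (Suc i) < p i \<longleftrightarrow> lt p i = LU \<and> lt p (Suc i) = LD)"
proof
  assume i: "1 \<le> i" "i < m" and d: "p (Suc i) < p i"
  have u: "i < p i"
  proof (rule ccontr)
    assume "\<not> i < p i"
    then consider "p i = i" | "p i < i" by linarith
    then show False
    proof cases
      case 1
      then show False using L1[of i "p (Suc i)"] d by simp
    next
      case 2
      have "p (Suc i) \<noteq> Suc i" using d 2 by auto
      then have "1 \<le> p (Suc i)" using nf_in by blast
      show False by (rule no321[of "p (Suc i)" "p i" i]) (use i d 2 \<open>1 \<le> p (Suc i)\<close> in simp_all)
    qed
  qed
  have dd: "p (Suc i) < Suc i"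
  proof (rule ccontr)
    assume "\<not> p (Suc i) < Suc i"
    then consider "p (Suc i) = Suc i" | "Suc i < p (Suc i)" by linarith
    then show False
    proof cases
      case 1
      then show False using L1[of "Suc i" i] d by simp
    next
      case 2
      have "p i \<le> m" using u nf_in[of i] by simp
      show False by (rule no321[of "Suc i" "p (Suc i)" "p i"]) (use i d 2 \<open>p i \<le> m\<close> in simp_all)
    qed
  qed
  show "lt p i = LU \<and> lt p (Suc i) = LD" using u dd by (simp add: lt_def)
next
  assume "lt p i = LU \<and> lt p (Suc i) = LD"
  then have "i < p i" "p (Suc i) < Suc i" "p (Suc i) \<noteq> Suc i" by (auto simp: lt_def split: if_splits)
  moreover have "p (Suc i) \<noteq> p i" by (metis pp n_not_Suc_n)
  ultimately show "p (Suc i) < p i" by linarith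
qed

lemma inj_p: "inj_on p A"
proof (rule inj_onI)
  fix x y assume "p x = p y"
  then have "p (p x) = p (p y)" by simp
  then show "x = y" by simp
qed

lemma ltD: "lt p i = LD \<longleftrightarrow> p i < i" by (auto simp: lt_def)
lemma ltU: "lt p i = LU \<longleftrightarrow> i < p i" by (auto simp: lt_def)
lemma ltF: "lt p i = LF \<longleftrightarrow> p i = i" by (auto simp: lt_def)

lemma V1: "cntf (lt p) LD t \<le> cntf (lt p) LU t"
  unfolding cntf_def
proof (rule card_inj_on_le)
  show "inj_on p {i \<in> {1..t}. lt p i = LD}" by (rule inj_p)
  show "p ` {i \<in> {1..t}. lt p i = LD} \<subseteq> {i \<in> {1..t}. lt p i = LU}"
  proof
    fix y assume "y \<in> p ` {i \<in> {1..t}. lt p i = LD}"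
    then obtain i where i: "i \<in> {1..t}" "p i < i" "y = p i" by (auto simp: ltD)
    then have "1 \<le> p i" using nf_in[of i] by auto
    then show "y \<in> {i \<in> {1..t}. lt p i = LU}" using i by (auto simp: ltU)
  qed
qed simp

lemma U_to_D: "(\<And>a. 1 \<le> a \<Longrightarrow> a \<le> t \<Longrightarrow> a < p a \<Longrightarrow> p a \<le> t) \<Longrightarrow> cntf (lt p) LU t \<le> cntf (lt p) LD t"
  unfolding cntf_def
proof (rule card_inj_on_le)
  assume h: "\<And>a. 1 \<le> a \<Longrightarrow> a \<le> t \<Longrightarrow> a < p a \<Longrightarrow> p a \<le> t"
  show "inj_on p {i \<in> {1..t}. lt p i = LU}" by (rule inj_p)
  show "p ` {i \<in> {1..t}. lt p i = LU} \<subseteq> {i \<in> {1..t}. lt p i = LD}"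
  proof
    fix y assume "y \<in> p ` {i \<in> {1..t}. lt p i = LU}"
    then obtain i where i: "i \<in> {1..t}" "i < p i" "y = p i" by (auto simp: ltU)
    then have "p i \<le> t" using h by auto
    then show "y \<in> {i \<in> {1..t}. lt p i = LD}" using i by (auto simp: ltD)
  qed
qed simp

lemma V2: "p f = f \<Longrightarrow> cntf (lt p) LU (f - 1) = cntf (lt p) LD (f - 1)"
proof -
  assume f: "p f = f"
  have "cntf (lt p) LU (f - 1) \<le> cntf (lt p) LD (f - 1)"
  proof (rule U_to_D)
    fix a assume a: "1 \<le> a" "a \<le> f - 1" "a < p a"
    show "p a \<le> f - 1"
    proof (rule ccontr)
      assume "\<not> p a \<le> f - 1"
      then have "f \<le> p a" by linarith
      moreover have "p a \<noteq> f" using f a by (metis pp le_less_trans diff_le_self less_irrefl)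
      ultimately show False using L1[of f a] f a by linarith
    qed
  qed
  then show ?thesis using V1[of "f - 1"] by linarith
qed

lemma V3: "cntf (lt p) LU m = cntf (lt p) LD m"
proof -
  have "cntf (lt p) LU m \<le> cntf (lt p) LD m"
    by (rule U_to_D) (use nf_in in fastforce)
  then show ?thesis using V1[of m] by linarith
qed

lemma wordOf_Wc: "wordOf m p \<in> Wc m"
proof -
  let ?xs = "wordOf m p"
  have "valid ?xs"
    unfolding valid_def
  proof (intro conjI allI impI)
    fix t assume "t \<le> length ?xs"
    then show "cnt LD (take t ?xs) \<le> cnt LU (take t ?xs)" using V1 by (simp add: cnt_wordOf)
  next
    fix i assume i: "i < length ?xs" "?xs ! i = LF"
    then have "lt p (Suc i) = LF" using wordOf_nth[of "Suc i" m p] by simp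
    then have "p (Suc i) = Suc i" by (simp add: ltF)
    then show "cnt LU (take i ?xs) = cnt LD (take i ?xs)" using V2[of "Suc i"] i by (simp add: cnt_wordOf)
  qed
  moreover have "cnt LU ?xs = cnt LD ?xs" using V3 cnt_wordOf[of m m] by simp
  ultimately show ?thesis unfolding Wc_def by simp
qed

lemma fp_word: "fp m p = cnt LF (wordOf m p)"
  using cnt_wordOf[of m m LF p] by (simp add: fp_def cntf_def ltF)

lemma maj_word: "maj m p = majw (wordOf m p)"
proof -
  have "{i. 1 \<le> i \<and> i < m \<and> p i > p (Suc i)} = {i. 1 \<le> i \<and> i < length (wordOf m p) \<and> wordOf m p ! (i - 1) = LU \<and> wordOf m p ! i = LD}"
  proof (rule set_eqI)
    fix i
    show "i \<in> {i. 1 \<le> i \<and> i < m \<and> p i > p (Suc i)} \<longleftrightarrow> i \<in> {i. 1 \<le> i \<and> i < length (wordOf m p) \<and> wordOf m p ! (i - 1) = LU \<and> wordOf m p ! i = LD}"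
      using descent[of i] wordOf_nth[of i m p] wordOf_nth[of "Suc i" m p] by auto
  qed
  then show ?thesis unfolding maj_def majw_def by simp
qed

end



lemma lt_out: "p \<in> inv321 m \<Longrightarrow> i \<notin> {1..m} \<Longrightarrow> lt p i = LF"
  using out by (auto simp: lt_def)

lemma K:
  assumes m1: "p \<in> inv321 m" and m2: "q \<in> inv321 m" and eq: "\<And>i. lt p i = lt q i"
    and u: "lt p a = LU" and IH: "\<And>b. b < a \<Longrightarrow> lt p b = LU \<Longrightarrow> p b = q b"
  shows "\<not> p a < q a"
proof
  assume lt1: "p a < q a"
  define c where "c = p a"
  have ac: "a < c" using u unfolding c_def by (simp add: ltU[OF m1])
  have "lt p c = LD" using ac unfolding c_def by (simp add: ltD[OF m1] pp[OF m1])
  then have "lt q c = LD" using eq by simp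
  then have qc: "q c < c" by (simp add: ltD[OF m2])
  define b where "b = q c"
  have qb: "q b = c" unfolding b_def by (simp add: pp[OF m2])
  have bU: "b < q b" using qc qb unfolding b_def by simp
  have "lt q b = LU" using bU by (simp add: ltU[OF m2])
  then have pbU: "lt p b = LU" using eq by simp
  consider "b = a" | "b < a" | "a < b" by linarith
  then show False
  proof cases
    case 1
    then show False using qb lt1 unfolding c_def by simp
  next
    case 2
    then have "p b = q b" using IH pbU by blast
    then have "p b = p a" using qb unfolding c_def by simp
    then have "p (p b) = p (p a)" by simp
    then have "b = a" by (simp add: pp[OF m1])
    then show False using 2 by simp
  next
    case 3
    have "a < q a" using \<open>lt p a = LU\<close> eq ltU[OF m2] by metis
    then have "q a < q b" using FIFO[OF m2 3] bU by blast
    then show False using qb lt1 unfolding c_def by simp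
  qed
qed

lemma wordOf_inj:
  assumes m1: "p \<in> inv321 m" and m2: "q \<in> inv321 m" and w: "wordOf m p = wordOf m q"
  shows "p = q"
proof -
  have eq: "lt p i = lt q i" for i
  proof (cases "i \<in> {1..m}")
    case True
    then show ?thesis using w wordOf_nth[of i m p] wordOf_nth[of i m q] by auto
  next
    case False
    then show ?thesis using lt_out[OF m1] lt_out[OF m2] by simp
  qed
  have U: "lt p a = LU \<longrightarrow> p a = q a" for a
  proof (induction a rule: less_induct)
    case (less a)
    show ?case
    proof
      assume u: "lt p a = LU"
      have IH: "\<And>b. b < a \<Longrightarrow> lt p b = LU \<Longrightarrow> p b = q b" using less by blast
      have IH': "\<And>b. b < a \<Longrightarrow> lt q b = LU \<Longrightarrow> q b = p b" using less eq by metis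
      have "\<not> p a < q a" by (rule K[OF m1 m2 eq u IH])
      moreover have "\<not> q a < p a" by (rule K[OF m2 m1]) (use eq u IH' in auto)
      ultimately show "p a = q a" by simp
    qed
  qed
  show "p = q"
  proof
    fix i
    consider "lt p i = LF" | "lt p i = LU" | "lt p i = LD" by (cases "lt p i") auto
    then show "p i = q i"
    proof cases
      case 1
      then have "lt q i = LF" using eq by simp
      then show ?thesis using 1 by (simp add: ltF[OF m1] ltF[OF m2])
    next
      case 2 then show ?thesis using U by blast
    next
      case 3
      then have "p i < i" by (simp add: ltD[OF m1])
      then have "lt p (p i) = LU" by (simp add: ltU[OF m1] pp[OF m1])
      then have "q (p i) = p (p i)" using U by metis
      then have "q (q (p i)) = q i" by (simp add: pp[OF m1])
      then show ?thesis by (simp add: pp[OF m2])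
    qed
  qed
qed



definition gx :: "ltr list \<Rightarrow> nat \<Rightarrow> ltr" where "gx xs i = xs ! (i - 1)"

definition psi :: "nat \<Rightarrow> ltr list \<Rightarrow> nat \<Rightarrow> nat" where
  "psi m xs i = (if 1 \<le> i \<and> i \<le> m then
      (if gx xs i = LU then (LEAST c. cntf (gx xs) LU i \<le> cntf (gx xs) LD c)
       else if gx xs i = LD then (LEAST a. cntf (gx xs) LD i \<le> cntf (gx xs) LU a)
       else i) else i)"

lemma least_hit:
  assumes r: "1 \<le> r" "r \<le> cntf g x T"
  defines "c \<equiv> LEAST c. r \<le> cntf g x c"
  shows "1 \<le> c \<and> c \<le> T \<and> cntf g x c = r \<and> g c = x"
proof -
  have c1: "r \<le> cntf g x c" unfolding c_def by (rule LeastI[of _ T]) (use r in simp)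
  have c2: "c \<le> T" unfolding c_def by (rule Least_le) (use r in simp)
  have "c \<noteq> 0"
  proof
    assume "c = 0"
    then show False using c1 r by simp
  qed
  then obtain c' where c': "c = Suc c'" by (cases c) auto
  have "\<not> r \<le> cntf g x c'" unfolding c_def by (rule not_less_Least) (use c' c_def in simp)
  then show ?thesis using c1 c2 c' cntf_Suc[of g x c'] by (auto split: if_splits)
qed

lemma psi_out: "\<not> (1 \<le> i \<and> i \<le> m) \<Longrightarrow> psi m xs i = i"
  unfolding psi_def by (simp only: if_False)

lemma psi_F: "gx xs i = LF \<Longrightarrow> psi m xs i = i"
  unfolding psi_def by simp

lemma gx_eq: "gx xs = (\<lambda>i. xs ! (i - 1))"
  by (rule ext) (simp add: gx_def)

context
  fixes m :: nat and xs :: "ltr list"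
  assumes W: "xs \<in> Wc m"
begin

abbreviation "g \<equiv> gx xs"
abbreviation "C \<equiv> cntf (gx xs)"
abbreviation "s \<equiv> psi m xs"

lemma lenx: "length xs = m" using W by (simp add: Wc_def)

lemma Clink: "t \<le> m \<Longrightarrow> cnt x (take t xs) = C x t"
  using cnt_take[of t xs x] lenx by (simp add: gx_eq)

lemma W1: assumes "t \<le> m" shows "C LD t \<le> C LU t"
proof -
  have "valid xs" using W by (simp add: Wc_def)
  then have "cnt LD (take t xs) \<le> cnt LU (take t xs)" using assms lenx unfolding valid_def by simp
  then show ?thesis using Clink[OF assms] by simp
qed

lemma W2: "1 \<le> i \<Longrightarrow> i \<le> m \<Longrightarrow> g i = LF \<Longrightarrow> C LU (i - 1) = C LD (i - 1)"
proof -
  assume i: "1 \<le> i" "i \<le> m" "g i = LF"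
  then have "xs ! (i - 1) = LF" "i - 1 < length xs" using lenx by (auto simp: gx_def)
  then have "cnt LU (take (i - 1) xs) = cnt LD (take (i - 1) xs)" using W unfolding Wc_def valid_def by blast
  then show ?thesis using Clink[of "i - 1"] i by simp
qed

lemma W3: "C LU m = C LD m"
  using W Clink[of m] lenx unfolding Wc_def by simp

lemma Cpos: "1 \<le> i \<Longrightarrow> g i = x \<Longrightarrow> 1 \<le> C x i"
  using cntf_strict[of 0 i g x] by simp

lemma E1: assumes i: "1 \<le> i" "i \<le> m" "g i = LU"
  shows "1 \<le> s i \<and> s i \<le> m \<and> C LD (s i) = C LU i \<and> g (s i) = LD \<and> i < s i"
proof -
  have "C LU i \<le> C LU m" using i by (intro cntf_mono)
  then have r: "1 \<le> C LU i" "C LU i \<le> C LD m" using Cpos[of i] i W3 by auto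
  have sdef: "s i = (LEAST c. C LU i \<le> C LD c)" using i by (simp add: psi_def)
  have h: "1 \<le> s i \<and> s i \<le> m \<and> C LD (s i) = C LU i \<and> g (s i) = LD"
    unfolding sdef by (rule least_hit[OF r])
  have "i < s i"
  proof (rule ccontr)
    assume "\<not> i < s i"
    then have "s i < i \<or> s i = i" by linarith
    then show False
    proof
      assume "s i = i" then show False using h i by simp
    next
      assume si: "s i < i"
      have "C LD (s i) \<le> C LU (s i)" by (rule W1) (use h in simp)
      also have "\<dots> < C LU i" using cntf_strict[of "s i" i g LU] si i by simp
      finally show False using h by simp
    qed
  qed
  then show ?thesis using h by simp
qed

lemma E2: assumes i: "1 \<le> i" "i \<le> m" "g i = LD"
  shows "1 \<le> s i \<and> s i \<le> m \<and> C LU (s i) = C LD i \<and> g (s i) = LU \<and> s i < i"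
proof -
  have r: "1 \<le> C LD i" "C LD i \<le> C LU i" using Cpos[of i] i W1[of i] by auto
  have sdef: "s i = (LEAST c. C LD i \<le> C LU c)" using i by (simp add: psi_def)
  have h: "1 \<le> s i \<and> s i \<le> i \<and> C LU (s i) = C LD i \<and> g (s i) = LU"
    unfolding sdef by (rule least_hit[OF r])
  then have "s i \<noteq> i" using i by auto
  then show ?thesis using h i by simp
qed

lemma ss: "s (s i) = i"
proof (cases "1 \<le> i \<and> i \<le> m")
  case False
  then have "s i = i" by (rule psi_out)
  then show ?thesis by simp
next
  case True
  consider "g i = LU" | "g i = LD" | "g i = LF" by (cases "g i") auto
  then show ?thesis
  proof cases
    case 1
    note h = E1[OF _ _ 1] True
    let ?c = "s i"
    have "s ?c = (LEAST a. C LD ?c \<le> C LU a)" using h by (simp add: psi_def)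
    also have "\<dots> = i"
    proof (rule Least_equality)
      show "C LD ?c \<le> C LU i" using h by simp
      fix y assume "C LD ?c \<le> C LU y"
      then have "C LU i \<le> C LU y" using h by simp
      then show "i \<le> y" using cntf_strict[of y i g LU] 1 by (meson not_le)
    qed
    finally show ?thesis .
  next
    case 2
    note h = E2[OF _ _ 2] True
    let ?c = "s i"
    have "s ?c = (LEAST a. C LU ?c \<le> C LD a)" using h by (simp add: psi_def)
    also have "\<dots> = i"
    proof (rule Least_equality)
      show "C LU ?c \<le> C LD i" using h by simp
      fix y assume "C LU ?c \<le> C LD y"
      then have "C LD i \<le> C LD y" using h by simp
      then show "i \<le> y" using cntf_strict[of y i g LD] 2 by (meson not_le)
    qed
    finally show ?thesis .
  next
    case 3
    then show ?thesis by (simp add: psi_F)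
  qed
qed

lemma lt_s: "1 \<le> i \<Longrightarrow> i \<le> m \<Longrightarrow> lt s i = g i"
proof -
  assume i: "1 \<le> i" "i \<le> m"
  consider "g i = LU" | "g i = LD" | "g i = LF" by (cases "g i") auto
  then show ?thesis
  proof cases
    case 1 then show ?thesis using E1[OF i 1] by (simp add: lt_def)
  next
    case 2 then show ?thesis using E2[OF i 2] by (simp add: lt_def)
  next
    case 3 then show ?thesis by (simp add: lt_def psi_F)
  qed
qed

lemma s_perm: "s permutes {1..m}"
  unfolding permutes_def
proof (intro conjI allI impI)
  fix x assume "x \<notin> {1..m}" then show "s x = x" by (intro psi_out) simp
next
  fix y show "\<exists>!x. s x = y"
  proof
    show "s (s y) = y" by (rule ss)
    fix x assume "s x = y"
    then have "s (s x) = s y" by simp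
    then show "x = s y" by (simp add: ss)
  qed
qed

lemma s_inv: "involution s"
  unfolding involution_def by (rule ext) (simp add: ss)

lemma s_av: "avoids321 m s"
  unfolding avoids321_def
proof (intro notI, elim exE conjE)
  fix i j k assume a: "1 \<le> i" "i < j" "j < k" "k \<le> m" "s j < s i" "s k < s j"
  have jr: "1 \<le> j" "j \<le> m" "1 \<le> i" "i \<le> m" "1 \<le> k" using a by auto
  consider "g j = LF" | "g j = LU" | "g j = LD" by (cases "g j") auto
  then show False
  proof cases
    case 1
    then have sj: "s j = j" by (simp add: psi_F)
    consider "g i = LF" | "g i = LU" | "g i = LD" by (cases "g i") auto
    then show False
    proof cases
      case 1 then have "s i = i" by (simp add: psi_F)
      then show False using a sj by simp
    next
      case 3 then show False using E2[OF jr(3,4) 3] a sj by simp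
    next
      case 2
      note h = E1[OF jr(3,4) 2]
      have "C LU i \<le> C LU (j - 1)" using a by (intro cntf_mono) simp
      also have "\<dots> = C LD (j - 1)" using W2[OF jr(1,2) 1] .
      also have "\<dots> < C LD (s i)" using h a sj by (intro cntf_strict) auto
      finally show False using h by simp
    qed
  next
    case 2
    note hj = E1[OF jr(1,2) 2]
    consider "g i = LF" | "g i = LU" | "g i = LD" by (cases "g i") auto
    then show False
    proof cases
      case 1 then have "s i = i" by (simp add: psi_F)
      then show False using a hj by simp
    next
      case 3 then show False using E2[OF jr(3,4) 3] a hj by simp
    next
      case 2
      note hi = E1[OF jr(3,4) 2]
      have "C LD (s i) < C LD (s j)" using hi hj cntf_strict[of i j g LU] a 2 \<open>g j = LU\<close> by simp
      moreover have "C LD (s j) \<le> C LD (s i)" using a by (intro cntf_mono) simp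
      ultimately show False by simp
    qed
  next
    case 3
    note hj = E2[OF jr(1,2) 3]
    have kr: "1 \<le> k" "k \<le> m" using a by auto
    consider "g k = LF" | "g k = LU" | "g k = LD" by (cases "g k") auto
    then show False
    proof cases
      case 1 then have "s k = k" by (simp add: psi_F)
      then show False using a hj by simp
    next
      case 2 then show False using E1[OF kr 2] a hj by simp
    next
      case 3
      note hk = E2[OF kr 3]
      have "C LU (s j) < C LU (s k)" using hk hj cntf_strict[of j k g LD] a 3 \<open>g j = LD\<close> by simp
      moreover have "C LU (s k) \<le> C LU (s j)" using a by (intro cntf_mono) simp
      ultimately show False by simp
    qed
  qed
qed

lemma s_mem: "s \<in> inv321 m"
  unfolding inv321_def using s_perm s_inv s_av by simp

lemma s_word: "wordOf m s = xs"
proof (rule nth_equalityI)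
  show "length (wordOf m s) = length xs" using lenx by simp
  fix j assume "j < length (wordOf m s)"
  then have j: "1 \<le> Suc j" "Suc j \<le> m" by auto
  have "wordOf m s ! j = lt s (Suc j)" using wordOf_nth[OF j] by simp
  also have "\<dots> = g (Suc j)" using lt_s[OF j] .
  also have "\<dots> = xs ! j" by (simp add: gx_def)
  finally show "wordOf m s ! j = xs ! j" .
qed

end

lemma wordOf_surj: "xs \<in> Wc m \<Longrightarrow> \<exists>p \<in> inv321 m. wordOf m p = xs"
  using s_mem s_word by blast



lemma cnt_total: "cnt LU xs + cnt LD xs + cnt LF xs = length xs"
proof (induction xs)
  case Nil then show ?case by simp
next
  case (Cons a xs) then show ?case by (cases a) (auto simp: cnt_def)
qed

lemma finite_Wc: "finite (Wc m)"
proof (rule finite_subset)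
  show "Wc m \<subseteq> {xs. set xs \<subseteq> {LU, LD, LF} \<and> length xs = m}" using set_ltr by (auto simp: Wc_def)
  show "finite {xs. set xs \<subseteq> {LU, LD, LF} \<and> length xs = m}" by (rule finite_lists_length_eq) simp
qed

lemma transfer:
  "(\<Sum>p \<in> {p \<in> inv321 m. P (fp m p)}. (q::'a::comm_ring_1) ^ maj m p) = (\<Sum>xs \<in> {xs \<in> Wc m. P (cnt LF xs)}. q ^ majw xs)"
proof -
  have bij: "bij_betw (wordOf m) {p \<in> inv321 m. P (fp m p)} {xs \<in> Wc m. P (cnt LF xs)}"
    unfolding bij_betw_def
  proof
    show "inj_on (wordOf m) {p \<in> inv321 m. P (fp m p)}"
      by (rule inj_onI) (use wordOf_inj in blast)
    show "wordOf m ` {p \<in> inv321 m. P (fp m p)} = {xs \<in> Wc m. P (cnt LF xs)}"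
    proof
      show "wordOf m ` {p \<in> inv321 m. P (fp m p)} \<subseteq> {xs \<in> Wc m. P (cnt LF xs)}"
        using wordOf_Wc fp_word by auto
      show "{xs \<in> Wc m. P (cnt LF xs)} \<subseteq> wordOf m ` {p \<in> inv321 m. P (fp m p)}"
      proof
        fix xs assume xs: "xs \<in> {xs \<in> Wc m. P (cnt LF xs)}"
        then obtain p where p: "p \<in> inv321 m" "wordOf m p = xs" using wordOf_surj by blast
        then have "P (fp m p)" using xs fp_word by auto
        then show "xs \<in> wordOf m ` {p \<in> inv321 m. P (fp m p)}" using p by blast
      qed
    qed
  qed
  have "(\<Sum>p \<in> {p \<in> inv321 m. P (fp m p)}. q ^ maj m p) = (\<Sum>p \<in> {p \<in> inv321 m. P (fp m p)}. q ^ majw (wordOf m p))"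
    by (rule sum.cong) (auto simp: maj_word)
  also have "\<dots> = (\<Sum>xs \<in> {xs \<in> Wc m. P (cnt LF xs)}. q ^ majw xs)"
    by (rule sum.reindex_bij_betw[OF bij])
  finally show ?thesis .
qed

lemma Wc_F: "xs \<in> Wc m \<Longrightarrow> cnt LF xs = m - 2 * cnt LD xs \<and> cnt LU xs = cnt LD xs \<and> 2 * cnt LD xs \<le> m"
  using cnt_total[of xs] unfolding Wc_def by auto

lemma Wc_Wd: "2 * d \<le> m \<Longrightarrow> {xs \<in> Wc m. cnt LD xs = d} = Wd m d 0"
  unfolding Wc_def Wd_def by auto

theorem mainTheorem13:
  fixes q :: "'a::comm_ring_1"
  shows "(\<forall>a b. a \<le> b \<longrightarrow>
            (\<Sum>\<pi> \<in> {\<pi> \<in> inv321 (a + b). fp (a + b) \<pi> \<ge> b - a}. q ^ maj (a + b) \<pi>)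
              = qbinom q (a + b) a)
       \<and> (\<forall>n l. l \<le> n \<and> even (n - l) \<longrightarrow>
            (\<Sum>\<pi> \<in> {\<pi> \<in> inv321 n. fp n \<pi> = l}. q ^ maj n \<pi>)
              = qbinom q n ((n - l) div 2)
                - (if (n - l) div 2 = 0 then 0 else qbinom q n ((n - l) div 2 - 1)))"
proof (intro conjI allI impI)
  fix a b :: nat assume ab: "a \<le> b"
  define m where "m = a + b"
  let ?S = "{xs \<in> Wc m. b - a \<le> cnt LF xs}"
  have "(\<Sum>\<pi> \<in> {\<pi> \<in> inv321 m. fp m \<pi> \<ge> b - a}. q ^ maj m \<pi>) = (\<Sum>xs \<in> ?S. q ^ majw xs)"
    by (rule transfer)
  also have "\<dots> = (\<Sum>d \<in> {..a}. \<Sum>xs \<in> {xs. xs \<in> ?S \<and> cnt LD xs = d}. q ^ majw xs)"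
  proof (rule sum.group[symmetric])
    show "finite ?S" using finite_Wc by simp
    show "finite {..a}" by simp
    show "cnt LD ` ?S \<subseteq> {..a}"
    proof
      fix d assume "d \<in> cnt LD ` ?S"
      then obtain xs where "xs \<in> ?S" "d = cnt LD xs" by blast
      then show "d \<in> {..a}" using Wc_F[of xs m] ab unfolding m_def by auto
    qed
  qed
  also have "\<dots> = (\<Sum>d \<in> {..a}. X q m d)"
  proof (rule sum.cong)
    fix d assume d: "d \<in> {..a}"
    have "{xs. xs \<in> ?S \<and> cnt LD xs = d} = {xs \<in> Wc m. cnt LD xs = d}"
      using Wc_F d ab unfolding m_def by auto
    also have "\<dots> = Wd m d 0" using d ab unfolding m_def by (intro Wc_Wd) simp
    finally show "(\<Sum>xs \<in> {xs. xs \<in> ?S \<and> cnt LD xs = d}. q ^ majw xs) = X q m d"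
      using Wd_closed[of d m q] d ab unfolding m_def by simp
  qed simp
  also have "\<dots> = qbinom q m a" by (rule X_tele)
  finally show "(\<Sum>\<pi> \<in> {\<pi> \<in> inv321 (a + b). fp (a + b) \<pi> \<ge> b - a}. q ^ maj (a + b) \<pi>) = qbinom q (a + b) a"
    unfolding m_def .
next
  fix n l :: nat assume nl: "l \<le> n \<and> even (n - l)"
  define k where "k = (n - l) div 2"
  have ev: "2 dvd (n - l)" using nl by blast
  have k2: "2 * k = n - l" unfolding k_def by (rule dvd_mult_div_cancel[OF ev])
  have "(\<Sum>\<pi> \<in> {\<pi> \<in> inv321 n. fp n \<pi> = l}. q ^ maj n \<pi>) = (\<Sum>xs \<in> {xs \<in> Wc n. cnt LF xs = l}. q ^ majw xs)"
    by (rule transfer)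
  also have "{xs \<in> Wc n. cnt LF xs = l} = {xs \<in> Wc n. cnt LD xs = k}"
    using Wc_F k2 nl by auto
  also have "\<dots> = Wd n k 0" using k2 by (intro Wc_Wd) simp
  also have "(\<Sum>xs \<in> Wd n k 0. q ^ majw xs) = X q n k" using k2 by (intro Wd_closed) simp
  finally show "(\<Sum>\<pi> \<in> {\<pi> \<in> inv321 n. fp n \<pi> = l}. q ^ maj n \<pi>)
              = qbinom q n ((n - l) div 2)
                - (if (n - l) div 2 = 0 then 0 else qbinom q n ((n - l) div 2 - 1))"
    unfolding k_def X_def .
qed


end
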